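(* Let $n\ge 3$ be an integer, let $\Delta_n=\{x=(x_1,\dots,x_n)\in\mathbb{R}^n : x_i\ge 0 \text{ for all } i,\ x_1+\cdots+x_n=1\}$ be the probability simplex, and let $u=(\tfrac1n,\dots,\tfrac1n)\in\Delta_n$. For every $p\in\Delta_n\setminus\{u\}$ there are unique points $a(p),b(p)\in\Delta_n$ such that $\{u,p\}\subseteq[a(p),b(p)]$ and $\|a(p)-b(p)\|$ is maximal among all segments in $\Delta_n$ containing $u$ and $p$ (here $a(p)$ is the endpoint on the side of $u$ opposite to $p$, and $b(p)$ the endpoint on the side of $p$). Then the maximum value of $$\max_{p\in\Delta_n\setminus\{u\}} \frac{\langle a(p),b(p)\rangle}{\|a(p)\|\,\|b(p)\|}$$ is $\dfrac{n-2}{n+2}$, and a pair realizing this maximum is $a^*=\tfrac1n(2,1,1,\dots,1,0)$, $b^*=\tfrac1n(0,1,1,\dots,1,2)$. Consequently, the minimal angle spread, i.e. the minimum over $p\in\Delta_n\setminus\{u\}$ of the angle $\arccos\big(\langle a(p),b(p)\rangle/(\|a(p)\|\|b(p)\|)\big)$, equals $\arccos\big(\tfrac{n-2}{n+2}\big)$.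
   Context: $\mathbb{R}^n$ carries the standard Euclidean inner product $\langle\cdot,\cdot\rangle$ and norm $\|\cdot\|$. For $a,b\in\mathbb{R}^n$, $[a,b]=\{(1-t)a+tb: t\in[0,1]\}$ denotes the closed line segment. The angle between nonzero vectors $a,b$ is $\measuredangle(a,b)=\arccos\big(\langle a,b\rangle/(\|a\|\|b\|)\big)$. *)

theory Defs
  imports "HOL-Analysis.Analysis"
begin

text \<open>Vectors in R^n are modelled as real^'n, with the index type 'n finite and
  linearly ordered, so that its least and greatest elements play the role of the
  coordinates 1 and n.\<close>

definition prob_simplex :: "(real ^ 'n::finite) set" where
  "prob_simplex = {x. (\<forall>i. 0 \<le> x $ i) \<and> (\<Sum>i\<in>UNIV. x $ i) = 1}"

definition unif :: "real ^ 'n::finite" where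
  "unif = (\<chi> i. 1 / real CARD('n))"

definition max_seg :: "real ^ 'n::finite \<Rightarrow> real ^ 'n \<Rightarrow> real ^ 'n \<Rightarrow> bool" where
  "max_seg p a b \<longleftrightarrow>
     a \<in> prob_simplex \<and> b \<in> prob_simplex \<and>
     {unif, p} \<subseteq> closed_segment a b \<and>
     unif \<in> closed_segment a p \<and> p \<in> closed_segment unif b \<and>
     (\<forall>c\<in>prob_simplex. \<forall>d\<in>prob_simplex.
        {unif, p} \<subseteq> closed_segment c d \<longrightarrow> norm (c - d) \<le> norm (a - b))"

definition cos_ab :: "real ^ 'n::finite \<Rightarrow> real ^ 'n \<Rightarrow> real" where
  "cos_ab a b = inner a b / (norm a * norm b)"

definition a_star :: "real ^ 'n::{finite,linorder}" where
  "a_star = (\<chi> i. (if i = Min UNIV then 2 else if i = Max UNIV then 0 else 1) / real CARD('n))"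

definition b_star :: "real ^ 'n::{finite,linorder}" where
  "b_star = (\<chi> i. (if i = Min UNIV then 0 else if i = Max UNIV then 2 else 1) / real CARD('n))"

end

theory Submission
  imports Defs
begin

lemma unif_nth[simp]: "(unif :: real^'n::finite) $ i = 1 / real CARD('n)"
  by (simp add: unif_def)

lemma sum_unif: "(\<Sum>i\<in>UNIV. (unif::real^'n::finite) $ i) = 1"
  by simp

lemma seg_line:
  fixes u v :: "'a::real_vector"
  assumes "r0 \<le> r" "r \<le> r1" "r0 < r1"
  shows "u + r *\<^sub>R v \<in> closed_segment (u + r0 *\<^sub>R v) (u + r1 *\<^sub>R v)"
proof -
  define t where "t = (r - r0)/(r1 - r0)"
  have t01: "0 \<le> t" "t \<le> 1" using assms by (auto simp: t_def field_simps)
  have rr0: "t * (r1 - r0) = r - r0" using assms by (simp add: t_def)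
  have rr: "(1 - t) * r0 + t * r1 = r" using rr0 by (simp add: algebra_simps)
  have "(1 - t) *\<^sub>R (u + r0 *\<^sub>R v) + t *\<^sub>R (u + r1 *\<^sub>R v) = u + ((1 - t) * r0 + t * r1) *\<^sub>R v"
    by (simp add: algebra_simps)
  then have "u + r *\<^sub>R v = (1 - t) *\<^sub>R (u + r0 *\<^sub>R v) + t *\<^sub>R (u + r1 *\<^sub>R v)"
    using rr by simp
  then show ?thesis unfolding in_segment using t01 by blast
qed

lemma norm_line:
  fixes u v :: "'a::real_normed_vector"
  shows "norm ((u + r *\<^sub>R v) - (u + q *\<^sub>R v)) = \<bar>r - q\<bar> * norm v"
proof -
  have "(u + r *\<^sub>R v) - (u + q *\<^sub>R v) = (r - q) *\<^sub>R v" by (simp add: algebra_simps)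
  then show ?thesis by simp
qed

lemma line_of_seg:
  fixes u v c d :: "real^'n::finite"
  assumes "u \<in> closed_segment c d" "u + v \<in> closed_segment c d" "v \<noteq> 0"
  shows "\<exists>rc rd. c = u + rc *\<^sub>R v \<and> d = u + rd *\<^sub>R v"
proof -
  obtain l where l: "u = (1 - l) *\<^sub>R c + l *\<^sub>R d" using assms(1) unfolding in_segment by blast
  obtain m where m: "u + v = (1 - m) *\<^sub>R c + m *\<^sub>R d" using assms(2) unfolding in_segment by blast
  have ml: "m - l \<noteq> 0"
  proof
    assume "m - l = 0"
    then have "m = l" by simp
    then have "u + v = u" using l m by simp
    then show False using assms(3) by simp
  qed
  have uk: "\<And>k. u$k = (1 - l) * c$k + l * d$k" using l by (simp add: vec_eq_iff)
  have vk: "\<And>k. v$k = (l - m) * c$k + (m - l) * d$k"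
  proof -
    fix k
    have "u$k + v$k = (1 - m) * c$k + m * d$k" using m by (simp add: vec_eq_iff)
    then show "v$k = (l - m) * c$k + (m - l) * d$k" using uk[of k] by (simp add: algebra_simps)
  qed
  have "c = u + (- l / (m - l)) *\<^sub>R v"
    unfolding vec_eq_iff using ml by (simp add: uk vk field_simps; simp add: algebra_simps)
  moreover have "d = u + ((1 - l) / (m - l)) *\<^sub>R v"
    unfolding vec_eq_iff using ml by (simp add: uk vk field_simps; simp add: algebra_simps)
  ultimately show ?thesis by blast
qed


lemma inner_line:
  fixes v :: "real^'n::finite"
  assumes "(\<Sum>k\<in>UNIV. v$k) = 0"
  shows "inner (unif + r *\<^sub>R v) (unif + q *\<^sub>R v) = 1 / real CARD('n) + r * q * inner v v"
proof -
  have iu: "inner unif v = 0"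
    using assms by (simp add: inner_vec_def sum_divide_distrib[symmetric])
  have iu2: "inner v unif = 0" using iu by (simp add: inner_commute)
  have uu: "inner (unif::real^'n) unif = 1 / real CARD('n)"
    by (simp add: inner_vec_def)
  show ?thesis
    by (simp add: inner_add_left inner_add_right iu iu2 uu algebra_simps)
qed

lemma norm_line_u:
  fixes v :: "real^'n::finite"
  assumes "(\<Sum>k\<in>UNIV. v$k) = 0"
  shows "norm (unif + r *\<^sub>R v) = sqrt (1 / real CARD('n) + r^2 * inner v v)"
  using inner_line[OF assms, of r r] by (simp add: norm_eq_sqrt_inner power2_eq_square)

lemma cos_line:
  fixes v :: "real^'n::finite"
  assumes "(\<Sum>k\<in>UNIV. v$k) = 0"
  shows "cos_ab (unif + r *\<^sub>R v) (unif + q *\<^sub>R v) =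
     (1 / real CARD('n) + r * q * inner v v) /
       sqrt ((1 / real CARD('n) + r^2 * inner v v) * (1 / real CARD('n) + q^2 * inner v v))"
  unfolding cos_ab_def inner_line[OF assms] norm_line_u[OF assms] by (simp add: real_sqrt_mult)

lemma ex_argmax:
  fixes f :: "'n::finite \<Rightarrow> real"
  shows "\<exists>i. \<forall>k. f k \<le> f i"
proof -
  have "Max (range f) \<in> range f" by (rule Max_in) auto
  then obtain i where "f i = Max (range f)" by (metis imageE)
  moreover have "\<forall>k. f k \<le> Max (range f)" by auto
  ultimately show ?thesis by metis
qed

lemma sum_two:
  fixes f :: "'n::finite \<Rightarrow> real"
  assumes "m \<noteq> M" "\<And>k. k \<noteq> m \<Longrightarrow> k \<noteq> M \<Longrightarrow> f k = 0"
  shows "(\<Sum>k\<in>UNIV. f k) = f m + f M"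
proof -
  have "(\<Sum>k\<in>UNIV. f k) = (\<Sum>k\<in>{m, M}. f k)"
    by (rule sum.mono_neutral_right) (use assms in auto)
  then show ?thesis using assms(1) by simp
qed

lemma cos_alg:
  fixes K s t V N :: real
  assumes N3: "N \<ge> 3" and K: "K = 1/N" and V: "V > 0" and s: "s > 0" and t: "t > 0"
    and Q: "s*t*V \<ge> 2/N^2"
  shows "(K - s*t*V) / sqrt ((K + s^2*V)*(K + t^2*V)) \<le> (N-2)/(N+2)"
proof -
  define Q where "Q = s*t*V"
  have Kpos: "K > 0" using K N3 by simp
  have Qpos: "Q > 0" using s t V by (simp add: Q_def)
  have "(K + s^2*V)*(K + t^2*V) - (K + Q)^2 = K * V * (s - t)^2"
    by (simp add: Q_def power2_eq_square algebra_simps)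
  moreover have "K * V * (s - t)^2 \<ge> 0" using Kpos V by simp
  ultimately have "(K + Q)^2 \<le> (K + s^2*V)*(K + t^2*V)" by linarith
  then have sq: "K + Q \<le> sqrt ((K + s^2*V)*(K + t^2*V))"
    using Kpos Qpos by (metis real_le_rsqrt)
  have R0: "(N-2)/(N+2) \<ge> 0" using N3 by simp
  show ?thesis
  proof (cases "K - Q \<le> 0")
    case True
    have "sqrt ((K + s^2*V)*(K + t^2*V)) > 0" using sq Kpos Qpos by linarith
    then have "(K - Q) / sqrt ((K + s^2*V)*(K + t^2*V)) \<le> 0" using True
      by (simp add: divide_nonpos_pos)
    then show ?thesis using R0 Q_def by simp
  next
    case False
    have "(K - Q) / sqrt ((K + s^2*V)*(K + t^2*V)) \<le> (K - Q) / (K + Q)"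
    proof -
      have "K + Q > 0" using Kpos Qpos by simp
      moreover have "sqrt ((K + s^2*V)*(K + t^2*V)) > 0" using sq Kpos Qpos by linarith
      ultimately show ?thesis using False sq by (intro divide_left_mono) auto
    qed
    also have "\<dots> \<le> (N-2)/(N+2)"
    proof -
      have QK: "Q \<ge> 2/N^2" using Q by (simp add: Q_def)
      have "(K - Q) * (N + 2) \<le> (N - 2) * (K + Q)"
      proof -
        have "(N - 2) * (K + Q) - (K - Q) * (N + 2) = 2 * N * Q - 4 * K" by (simp add: algebra_simps)
        also have "\<dots> \<ge> 0"
        proof -
          have "2 * N * Q \<ge> 2 * N * (2/N^2)" using QK N3 by (intro mult_left_mono) auto
          also have "2 * N * (2/N^2) = 4 * K" using K N3 by (simp add: power2_eq_square field_simps)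
          finally show ?thesis by simp
        qed
        finally show ?thesis by simp
      qed
      then show ?thesis using Kpos Qpos N3 by (simp add: divide_simps)
    qed
    finally show ?thesis by (simp add: Q_def)
  qed
qed


lemma chord:
  fixes p :: "real^'n::finite"
  defines "N \<equiv> real CARD('n)"
  assumes card: "CARD('n) \<ge> 3" and pS: "p \<in> prob_simplex" and pu: "p \<noteq> unif"
    and vi: "(p - unif)$i = \<alpha>" and vmax: "\<forall>k. (p - unif)$k \<le> \<alpha>"
    and vj: "(p - unif)$j = -\<beta>" and vmin: "\<forall>k. -\<beta> \<le> (p - unif)$k"
  shows "max_seg p (unif + (-(1/(N*\<alpha>))) *\<^sub>R (p - unif)) (unif + (1/(N*\<beta>)) *\<^sub>R (p - unif))
     \<and> (\<forall>a b. max_seg p a b \<longrightarrow> a = unif + (-(1/(N*\<alpha>))) *\<^sub>R (p - unif) \<and> b = unif + (1/(N*\<beta>)) *\<^sub>R (p - unif))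
     \<and> cos_ab (unif + (-(1/(N*\<alpha>))) *\<^sub>R (p - unif)) (unif + (1/(N*\<beta>)) *\<^sub>R (p - unif)) \<le> (N - 2)/(N + 2)"
proof -
  define u :: "real^'n" where "u = unif"
  define v where "v = p - u"
  have N3: "N \<ge> 3" using card by (simp add: N_def)
  have Npos: "N > 0" using N3 by simp
  have uk: "\<And>k. u$k = 1/N" by (simp add: u_def N_def)
  have pk: "\<And>k. p$k \<ge> 0" and psum: "(\<Sum>k\<in>UNIV. p$k) = 1" using pS by (auto simp: prob_simplex_def)
  have vk: "\<And>k. v$k = p$k - 1/N" by (simp add: v_def uk)
  have vsum: "(\<Sum>k\<in>UNIV. v$k) = 0"
    using Npos by (simp add: vk sum_subtractf psum N_def)
  have v0: "v \<noteq> 0" using pu by (simp add: v_def u_def)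
  have vi': "v$i = \<alpha>" and vj': "v$j = -\<beta>" using vi vj by (simp_all add: v_def u_def)
  have vmax': "\<And>k. v$k \<le> \<alpha>" and vmin': "\<And>k. -\<beta> \<le> v$k" using vmax vmin by (simp_all add: v_def u_def)
  have apos: "\<alpha> > 0"
  proof (rule ccontr)
    assume "\<not> \<alpha> > 0"
    then have nn: "\<And>k. 0 \<le> - v$k" using vmax' by (metis le_less_trans neg_0_le_iff_le not_le)
    have "(\<Sum>k\<in>UNIV. - v$k) = 0" using vsum by (simp add: sum_negf)
    then have "\<forall>k\<in>UNIV. - v$k = 0" using sum_nonneg_eq_0_iff[of UNIV "\<lambda>k. - v$k"] nn by simp
    then have "v = 0" by (simp add: vec_eq_iff)
    with v0 show False by simp
  qed
  have bpos: "\<beta> > 0"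
  proof (rule ccontr)
    assume "\<not> \<beta> > 0"
    then have nn: "\<And>k. 0 \<le> v$k" using vmin' by (metis le_less_trans neg_0_le_iff_le not_le)
    then have "\<forall>k\<in>UNIV. v$k = 0" using sum_nonneg_eq_0_iff[of UNIV "\<lambda>k. v$k"] vsum by simp
    then have "v = 0" by (simp add: vec_eq_iff)
    with v0 show False by simp
  qed
  define s where "s = 1/(N*\<alpha>)"
  define t where "t = 1/(N*\<beta>)"
  have spos: "s > 0" and tpos: "t > 0" using Npos apos bpos by (simp_all add: s_def t_def)
  have sa: "s * \<alpha> = 1/N" and tb: "t * \<beta> = 1/N" using apos bpos by (simp_all add: s_def t_def)
  have inS: "u + r *\<^sub>R v \<in> prob_simplex \<longleftrightarrow> -s \<le> r \<and> r \<le> t" for r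
  proof
    assume "u + r *\<^sub>R v \<in> prob_simplex"
    then have nn: "\<And>k. 0 \<le> 1/N + r * v$k" by (auto simp: prob_simplex_def uk)
    have "0 \<le> 1/N + r * \<alpha>" using nn[of i] vi' by simp
    then have "(- s) * \<alpha> \<le> r * \<alpha>" using sa by simp
    then have 1: "-s \<le> r" using apos by (rule mult_right_le_imp_le)
    have "0 \<le> 1/N - r * \<beta>" using nn[of j] vj' by simp
    then have "r * \<beta> \<le> t * \<beta>" using tb by simp
    then have 2: "r \<le> t" using bpos by (rule mult_right_le_imp_le)
    show "-s \<le> r \<and> r \<le> t" using 1 2 by simp
  next
    assume r: "-s \<le> r \<and> r \<le> t"
    have nn: "0 \<le> 1/N + r * v$k" for k
    proof (cases "r \<ge> 0")
      case True
      have "r * (-\<beta>) \<le> r * v$k" using True vmin' by (intro mult_left_mono) auto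
      moreover have "r * \<beta> \<le> t * \<beta>" using r bpos by (intro mult_right_mono) auto
      ultimately show ?thesis using tb by simp
    next
      case False
      have "r * \<alpha> \<le> r * v$k" using False vmax' by (intro mult_left_mono_neg) auto
      moreover have "-s * \<alpha> \<le> r * \<alpha>" using r apos by (intro mult_right_mono) auto
      ultimately show ?thesis using sa by simp
    qed
    have "(\<Sum>k\<in>UNIV. u$k + r * v$k) = 1"
      using Npos vsum by (simp add: uk sum.distrib sum_distrib_left[symmetric] N_def)
    then show "u + r *\<^sub>R v \<in> prob_simplex"
      using nn by (simp add: prob_simplex_def uk)
  qed
  define a0 where "a0 = u + (-s) *\<^sub>R v"
  define b0 where "b0 = u + t *\<^sub>R v"
  have a0S: "a0 \<in> prob_simplex" using inS[of "-s"] spos tpos by (simp add: a0_def)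
  have b0S: "b0 \<in> prob_simplex" using inS[of t] spos tpos by (simp add: b0_def)
  have pv: "p = u + 1 *\<^sub>R v" by (simp add: v_def)
  have uv: "u = u + 0 *\<^sub>R v" by simp
  have t1: "1 \<le> t" using inS[of 1] pS pv by simp
  have nv: "norm v > 0" using v0 by simp
  have segs: "u \<in> closed_segment a0 b0" "p \<in> closed_segment a0 b0"
     "u \<in> closed_segment a0 p" "p \<in> closed_segment u b0"
    using seg_line[of "-s" 0 t u v] seg_line[of "-s" 1 t u v] seg_line[of "-s" 0 1 u v]
      seg_line[of 0 1 t u v] spos tpos t1
    by (simp_all add: a0_def b0_def v_def)
  have nab: "norm (a0 - b0) = (s + t) * norm v"
    using norm_line[of u "-s" v t] spos tpos by (simp add: a0_def b0_def)
  have maxs: "max_seg p a0 b0"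
    unfolding max_seg_def
  proof (intro conjI ballI impI)
    fix c d assume cS: "c \<in> prob_simplex" and dS: "d \<in> prob_simplex"
      and cd: "{unif, p} \<subseteq> closed_segment c d"
    have "u \<in> closed_segment c d" "u + v \<in> closed_segment c d" using cd by (auto simp: u_def v_def)
    then obtain rc rd where rc: "c = u + rc *\<^sub>R v" and rd: "d = u + rd *\<^sub>R v"
      using line_of_seg v0 by blast
    have "-s \<le> rc \<and> rc \<le> t" "-s \<le> rd \<and> rd \<le> t" using inS cS dS rc rd by auto
    then have "\<bar>rc - rd\<bar> \<le> s + t" by linarith
    then have "\<bar>rc - rd\<bar> * norm v \<le> (s + t) * norm v" using nv by (intro mult_right_mono) auto
    then show "norm (c - d) \<le> norm (a0 - b0)" using nab norm_line[of u rc v rd] rc rd by simp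
  qed (use a0S b0S segs in \<open>auto simp: u_def\<close>)
  have uniq: "a = a0 \<and> b = b0" if ms: "max_seg p a b" for a b
  proof -
    have aS: "a \<in> prob_simplex" and bS: "b \<in> prob_simplex" and ua: "u \<in> closed_segment a p"
      and pb: "p \<in> closed_segment u b"
      and mx: "norm (a0 - b0) \<le> norm (a - b)"
      using ms a0S b0S segs unfolding max_seg_def u_def by auto
    obtain l where l: "0 \<le> l" "l \<le> 1" "u = (1 - l) *\<^sub>R a + l *\<^sub>R p" using ua unfolding in_segment by blast
    have l1: "l \<noteq> 1" using l v0 by (auto simp: v_def)
    have "a = u + (- l / (1 - l)) *\<^sub>R v"
    proof -
      have "a$k = u$k + (- l / (1 - l)) * v$k" for k
      proof -
        have e: "u$k = (1 - l) * a$k + l * p$k" using l(3) by (simp add: vec_eq_iff)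
        have l1': "1 - l \<noteq> 0" using l1 by simp
        have h: "(1 - l) * (u$k + (- l / (1 - l)) * v$k) = (1 - l) * u$k - l * v$k"
          using l1' by (simp add: field_simps)
        have "(1 - l) * a$k = (1 - l) * (u$k + (- l / (1 - l)) * v$k)"
          unfolding h using e by (simp add: v_def algebra_simps)
        then show ?thesis using l1' by simp
      qed
      then show ?thesis by (simp add: vec_eq_iff)
    qed
    moreover have "- l / (1 - l) \<le> 0" using l l1 by simp
    ultimately obtain ra where ra: "a = u + ra *\<^sub>R v" "ra \<le> 0" by blast
    obtain m where m: "0 \<le> m" "m \<le> 1" "p = (1 - m) *\<^sub>R u + m *\<^sub>R b" using pb unfolding in_segment by blast
    have m0: "m \<noteq> 0" using m v0 by (auto simp: v_def)
    have "b = u + (1 / m) *\<^sub>R v"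
    proof -
      have "b$k = u$k + (1 / m) * v$k" for k
      proof -
        have e: "p$k = (1 - m) * u$k + m * b$k" using m(3) by (simp add: vec_eq_iff)
        have h: "m * (u$k + (1 / m) * v$k) = m * u$k + v$k"
          using m0 by (simp add: algebra_simps)
        have "m * b$k = m * (u$k + (1 / m) * v$k)"
          unfolding h using e by (simp add: v_def algebra_simps)
        then show ?thesis using m0 by simp
      qed
      then show ?thesis by (simp add: vec_eq_iff)
    qed
    moreover have "1 / m \<ge> 1" using m m0 by simp
    ultimately obtain rb where rb: "b = u + rb *\<^sub>R v" "rb \<ge> 1" by blast
    have "-s \<le> ra" "rb \<le> t" using inS aS bS ra rb by auto
    have "(s + t) * norm v \<le> \<bar>ra - rb\<bar> * norm v" using mx nab norm_line[of u ra v rb] ra rb by simp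
    then have "s + t \<le> \<bar>ra - rb\<bar>" using nv by simp
    then have "ra = -s" "rb = t" using \<open>-s \<le> ra\<close> \<open>rb \<le> t\<close> ra rb by linarith+
    then show ?thesis using ra rb by (simp add: a0_def b0_def)
  qed
  have cosb: "cos_ab a0 b0 \<le> (N - 2)/(N + 2)"
  proof -
    have ij: "i \<noteq> j" using vi' vj' apos bpos by auto
    define V where "V = inner v v"
    have "(\<Sum>k\<in>{i,j}. v$k * v$k) \<le> (\<Sum>k\<in>UNIV. v$k * v$k)"
      by (rule sum_mono2) auto
    then have VV: "\<alpha>*\<alpha> + \<beta>*\<beta> \<le> V" using ij vi' vj' by (simp add: V_def inner_vec_def)
    have Vpos: "V > 0" using v0 by (simp add: V_def)
    have "2 * \<alpha> * \<beta> \<le> \<alpha>*\<alpha> + \<beta>*\<beta>"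
    proof -
      have "0 \<le> (\<alpha> - \<beta>) * (\<alpha> - \<beta>)" by simp
      moreover have "(\<alpha> - \<beta>) * (\<alpha> - \<beta>) = \<alpha>*\<alpha> + \<beta>*\<beta> - 2 * \<alpha> * \<beta>" by (simp add: algebra_simps)
      ultimately show ?thesis by linarith
    qed
    then have ab: "2 * \<alpha> * \<beta> \<le> V" using VV by simp
    have "s*t*V \<ge> 2/N^2"
    proof -
      have "s*t*V = V / (N^2 * (\<alpha> * \<beta>))" by (simp add: s_def t_def power2_eq_square field_simps)
      also have "\<dots> \<ge> 2/N^2" using ab Npos apos bpos by (simp add: field_simps)
      finally show ?thesis .
    qed
    then have "((1/N) - s*t*V) / sqrt (((1/N) + s^2*V)*((1/N) + t^2*V)) \<le> (N-2)/(N+2)"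
      using cos_alg[OF N3 refl Vpos spos tpos] by simp
    then show ?thesis unfolding a0_def b0_def u_def using cos_line[OF vsum[unfolded v_def u_def], of "-s" t]
      by (simp add: v_def V_def N_def u_def)
  qed
  show ?thesis using maxs uniq cosb unfolding a0_def b0_def s_def t_def u_def v_def by blast
qed


lemma star_facts:
  assumes card: "CARD('n::{finite,linorder}) \<ge> 3"
  defines "N \<equiv> real CARD('n::{finite,linorder})"
  shows "(b_star::real^'n::{finite,linorder}) \<in> prob_simplex \<and> b_star \<noteq> (unif::real^'n::{finite,linorder}) \<and> max_seg b_star a_star (b_star::real^'n::{finite,linorder})
     \<and> cos_ab (a_star::real^'n::{finite,linorder}) b_star = (N - 2)/(N + 2)"
proof -
  define mn :: 'n where "mn = Min UNIV"
  define mx :: 'n where "mx = Max UNIV"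
  have N3: "N \<ge> 3" using card by (simp add: N_def)
  have Npos: "N > 0" using N3 by simp
  have mnmx: "mn \<noteq> mx"
  proof
    assume eq: "mn = mx"
    have "\<And>k::'n. k = mn"
    proof -
      fix k :: 'n
      have "mn \<le> k" "k \<le> mx" by (simp_all add: mn_def mx_def)
      then show "k = mn" using eq by simp
    qed
    then have U: "(UNIV::'n set) = {mn}" by auto
    have "CARD('n) = card {mn}" by (subst U[symmetric]) (rule refl)
    then have "CARD('n) = 1" by simp
    then show False using card by simp
  qed
  define e :: "real^'n::{finite,linorder}" where "e = b_star - unif"
  have ek: "e$k = (if k = mn then -1 else if k = mx then 1 else 0) / N" for k
    using mnmx by (auto simp: e_def b_star_def N_def mn_def mx_def diff_divide_distrib)
  have esum: "(\<Sum>k\<in>UNIV. e$k) = 0"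
    using sum_two[of mn mx "\<lambda>k. e$k"] mnmx by (simp add: ek)
  have bk: "(b_star::real^'n::{finite,linorder})$k = 1/N + e$k" for k by (simp add: e_def N_def)
  have bS: "(b_star::real^'n::{finite,linorder}) \<in> prob_simplex"
  proof -
    have "\<forall>k. 0 \<le> (b_star::real^'n::{finite,linorder})$k" by (simp add: b_star_def)
    moreover have "(\<Sum>k\<in>UNIV. (b_star::real^'n::{finite,linorder})$k) = 1"
      using esum Npos by (simp add: bk sum.distrib N_def)
    ultimately show ?thesis by (simp add: prob_simplex_def)
  qed
  have bu: "(b_star::real^'n::{finite,linorder}) \<noteq> unif"
  proof
    assume "(b_star::real^'n::{finite,linorder}) = unif"
    then have "e$mx = 0" by (simp add: e_def)
    then show False using mnmx Npos by (simp add: ek)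
  qed
  have emax: "\<forall>k. e$k \<le> 1/N" and emin: "\<forall>k. -(1/N) \<le> e$k"
    using Npos by (auto simp: ek divide_le_cancel)
  have emx: "e$mx = 1/N" and emn: "e$mn = -(1/N)"
    using mnmx by (simp_all add: ek)
  note ch = chord[OF card bS bu emx[unfolded e_def] emax[unfolded e_def] emn[unfolded e_def] emin[unfolded e_def], folded N_def]
  have NN: "N * (1/N) = 1" using Npos by simp
  have aeq: "unif + (-1) *\<^sub>R e = a_star"
    unfolding vec_eq_iff using mnmx Npos
    by (auto simp: ek a_star_def N_def mn_def mx_def field_simps)
  have beq: "unif + 1 *\<^sub>R e = b_star" by (simp add: e_def)
  have ms: "max_seg b_star a_star (b_star::real^'n::{finite,linorder})"
    using conjunct1[OF ch] unfolding NN e_def[symmetric] using aeq beq by simp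
  have V: "inner e e = 2 / N^2"
  proof -
    have "inner e e = (\<Sum>k\<in>UNIV. e$k * e$k)" by (simp add: inner_vec_def)
    also have "\<dots> = e$mn * e$mn + e$mx * e$mx"
      by (rule sum_two) (use mnmx in \<open>auto simp: ek\<close>)
    also have "\<dots> = 2 / N^2" using mnmx by (simp add: ek power2_eq_square)
    finally show ?thesis .
  qed
  have "cos_ab (a_star::real^'n::{finite,linorder}) b_star = (1/N - 2/N^2) / sqrt ((1/N + 2/N^2) * (1/N + 2/N^2))"
    using cos_line[OF esum, of "-1" 1] unfolding aeq beq by (simp add: V N_def)
  also have "\<dots> = (1/N - 2/N^2) / (1/N + 2/N^2)"
    using Npos by simp
  also have "\<dots> = ((N - 2)/N^2) / ((N + 2)/N^2)"
  proof -
    have "1/N - 2/N^2 = (N - 2)/N^2" "1/N + 2/N^2 = (N + 2)/N^2"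
      using Npos by (simp_all add: power2_eq_square field_simps)
    then show ?thesis by simp
  qed
  also have "\<dots> = (N - 2)/(N + 2)"
    using Npos by simp
  finally show ?thesis using bS bu ms by simp
qed


lemma chord_ex:
  fixes p :: "real^'n::finite"
  assumes card: "CARD('n) \<ge> 3" and pS: "p \<in> prob_simplex" and pu: "p \<noteq> unif"
  shows "\<exists>a0 b0. max_seg p a0 b0 \<and> (\<forall>a b. max_seg p a b \<longrightarrow> a = a0 \<and> b = b0)
     \<and> cos_ab a0 b0 \<le> (real CARD('n) - 2)/(real CARD('n) + 2)"
proof -
  obtain i where i: "\<forall>k. (p - unif)$k \<le> (p - unif)$i" using ex_argmax by blast
  obtain j where j: "\<forall>k. - (p - unif)$k \<le> - (p - unif)$j"
    using ex_argmax[of "\<lambda>k. - (p - unif)$k"] by blast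
  have j': "\<forall>k. - (- (p - unif)$j) \<le> (p - unif)$k" using j by auto
  have "(p - unif)$j = - (- (p - unif)$j)" by simp
  note ch = chord[OF card pS pu refl i this j']
  show ?thesis using ch by blast
qed

lemma cos_ge: "-1 \<le> cos_ab a b"
proof (cases "norm a * norm b = 0")
  case True then show ?thesis by (auto simp: cos_ab_def)
next
  case False
  then have pos: "norm a * norm b > 0" by (simp add: zero_less_mult_iff)
  have "- (norm a * norm b) \<le> inner a b" using Cauchy_Schwarz_ineq2[of a b] by linarith
  then show ?thesis using pos by (simp add: cos_ab_def field_simps)
qed

theorem theorem1p1:
  assumes "CARD('n::{finite,linorder}) \<ge> 3"
  defines "n \<equiv> real CARD('n)"
  shows "(\<forall>p::real^'n::{finite,linorder}. p \<in> prob_simplex - {unif} \<longrightarrow> (\<exists>!(a, b). max_seg p a b))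
    \<and> (\<lambda>S m. m \<in> S \<and> (\<forall>x\<in>S. x \<le> m)) {cos_ab a b | a b (p::real^'n::{finite,linorder}). p \<in> prob_simplex - {unif} \<and> max_seg p a b}
        ((n - 2) / (n + 2))
    \<and> (\<exists>p::real^'n::{finite,linorder}. p \<in> prob_simplex - {unif} \<and> max_seg p a_star b_star)
    \<and> cos_ab (a_star::real^'n::{finite,linorder}) b_star = (n - 2) / (n + 2)
    \<and> (\<lambda>S m. m \<in> S \<and> (\<forall>x\<in>S. m \<le> x)) {arccos (cos_ab a b) | a b (p::real^'n::{finite,linorder}). p \<in> prob_simplex - {unif} \<and> max_seg p a b}
        (arccos ((n - 2) / (n + 2)))"
proof -
  have n3: "n \<ge> 3" using assms(1) by (simp add: n_def)
  have A: "\<forall>p::real^'n::{finite,linorder}. p \<in> prob_simplex - {unif} \<longrightarrow> (\<exists>!(a, b). max_seg p a b)"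
  proof (intro allI impI)
    fix p :: "real^'n::{finite,linorder}"
    assume "p \<in> prob_simplex - {unif}"
    then obtain a0 b0 where h: "max_seg p a0 b0" "\<forall>a b. max_seg p a b \<longrightarrow> a = a0 \<and> b = b0"
      using chord_ex[OF assms(1), of p] by blast
    show "\<exists>!(a, b). max_seg p a b"
    proof (rule ex1I[of _ "(a0, b0)"])
      show "case (a0, b0) of (a, b) \<Rightarrow> max_seg p a b" using h(1) by simp
      fix x assume "case x of (a, b) \<Rightarrow> max_seg p a b"
      then show "x = (a0, b0)" using h(2) by (cases x) simp
    qed
  qed
  have ub: "cos_ab a b \<le> (n - 2) / (n + 2)"
    if pp: "(p::real^'n::{finite,linorder}) \<in> prob_simplex - {unif}" and ms: "max_seg p a b" for a b p
  proof -
    obtain a0 b0 where h: "max_seg p a0 b0" "\<forall>a b. max_seg p a b \<longrightarrow> a = a0 \<and> b = b0"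
      "cos_ab a0 b0 \<le> (real CARD('n) - 2)/(real CARD('n) + 2)"
      using chord_ex[OF assms(1), of p] pp by blast
    then show ?thesis using ms by (auto simp: n_def)
  qed
  have st: "(b_star::real^'n::{finite,linorder}) \<in> prob_simplex \<and> b_star \<noteq> (unif::real^'n::{finite,linorder})
     \<and> max_seg b_star a_star (b_star::real^'n::{finite,linorder})
     \<and> cos_ab (a_star::real^'n::{finite,linorder}) b_star = (n - 2)/(n + 2)"
    using star_facts[OF assms(1)] unfolding n_def .
  have C1: "(n - 2) / (n + 2) \<in> {cos_ab a b | a b (p::real^'n::{finite,linorder}). p \<in> prob_simplex - {unif} \<and> max_seg p a b}"
  proof -
    have "b_star \<in> prob_simplex - {unif::real^'n::{finite,linorder}}" using st by simp
    then show ?thesis using st by (intro CollectI exI[of _ a_star] exI[of _ b_star] exI[of _ "b_star::real^'n::{finite,linorder}"]) auto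
  qed
  have C2: "\<forall>x\<in>{cos_ab a b | a b (p::real^'n::{finite,linorder}). p \<in> prob_simplex - {unif} \<and> max_seg p a b}. x \<le> (n - 2) / (n + 2)"
  proof
    fix x assume "x \<in> {cos_ab a b | a b (p::real^'n::{finite,linorder}). p \<in> prob_simplex - {unif} \<and> max_seg p a b}"
    then obtain a b and p :: "real^'n::{finite,linorder}" where x: "x = cos_ab a b"
      and p: "p \<in> prob_simplex - {unif}" "max_seg p a b" by blast
    show "x \<le> (n - 2) / (n + 2)" unfolding x by (rule ub[OF p])
  qed
  have D: "\<exists>p::real^'n::{finite,linorder}. p \<in> prob_simplex - {unif} \<and> max_seg p a_star b_star"
  proof (rule exI[of _ "b_star::real^'n::{finite,linorder}"])
    have s1: "(b_star::real^'n::{finite,linorder}) \<in> prob_simplex" and s2: "(b_star::real^'n::{finite,linorder}) \<noteq> unif"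
      and s3: "max_seg (b_star::real^'n::{finite,linorder}) a_star b_star" using st by auto
    show "(b_star::real^'n::{finite,linorder}) \<in> prob_simplex - {unif} \<and> max_seg (b_star::real^'n::{finite,linorder}) a_star b_star"
      using s1 s2 s3 by simp
  qed
  have E1: "arccos ((n - 2) / (n + 2)) \<in> {arccos (cos_ab a b) | a b (p::real^'n::{finite,linorder}). p \<in> prob_simplex - {unif} \<and> max_seg p a b}"
  proof -
    have "b_star \<in> prob_simplex - {unif::real^'n::{finite,linorder}}" using st by simp
    then show ?thesis using st by (intro CollectI exI[of _ a_star] exI[of _ b_star] exI[of _ "b_star::real^'n::{finite,linorder}"]) auto
  qed
  have m1: "(n - 2) / (n + 2) \<le> 1" using n3 by simp
  have E2: "\<forall>x\<in>{arccos (cos_ab a b) | a b (p::real^'n::{finite,linorder}). p \<in> prob_simplex - {unif} \<and> max_seg p a b}. arccos ((n - 2) / (n + 2)) \<le> x"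
  proof
    fix x assume "x \<in> {arccos (cos_ab a b) | a b (p::real^'n::{finite,linorder}). p \<in> prob_simplex - {unif} \<and> max_seg p a b}"
    then obtain a b and p :: "real^'n::{finite,linorder}" where x: "x = arccos (cos_ab a b)"
      and p: "p \<in> prob_simplex - {unif}" "max_seg p a b" by blast
    show "arccos ((n - 2) / (n + 2)) \<le> x"
      unfolding x using arccos_le_arccos[OF cos_ge ub[OF p] m1] .
  qed
  show ?thesis
    apply (intro conjI)
    apply (rule A C1 C2 D E1 E2 st[THEN conjunct2, THEN conjunct2, THEN conjunct2])+
    done
qed

end
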